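(* Let $d\in\mathbb N$ and $\gamma\in\mathbb R$, and consider the planar system $$\dot Y_1=Y_2-dY_1Y_2,\qquad \dot Y_2=-Y_1-Y_2^2-\gamma Y_2^2 .$$ Then $Y_2$ satisfies the Liénard equation $\ddot Y_2+(2(1-\gamma)+d)\,Y_2\dot Y_2+Y_2+d(1-\gamma)Y_2^3=0$, and the origin is an isochronous center if and only if $(2(1-\gamma)+d)^2=9d(1-\gamma)$, i.e. if and only if $\gamma=1-d$ or $\gamma=1-\frac d4$. In particular, for $\gamma=0$ (the system of characteristics of radially symmetric non-relativistic cold plasma oscillations in $\mathbb R^d$, $\dot x=xY_2$, $\dot Y_1=Y_2-dY_1Y_2$, $\dot Y_2=-Y_1-Y_2^2$), the oscillations are isochronous if and only if $d=1$ or $d=4$. Correspondingly, adding the force term $\mathbf F(\mathbf V,r)=\gamma\,|\mathbf V|^2/r$ with $\gamma\in\{1-d,\,1-\frac d4\}$ to the right-hand side of the momentum equation of the radially symmetric Euler–Poisson system makes the radial oscillations isochronous in dimension $d$.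
   Context: The radially symmetric repulsive Euler–Poisson system with constant background $c=1$, $\mathbf v_t+(\mathbf v\cdot\nabla)\mathbf v=-\nabla\Psi$, $\rho_t+\mathrm{div}(\rho\mathbf v)=0$, $\Delta\Psi=1-\rho$, with $\mathbf v=F(t,r)\mathbf r$, $\nabla\Psi=G(t,r)\mathbf r$, $r=|\mathbf r|$, reduces to $G_t+FrG_r=F-dFG$, $F_t+FrF_r=-F^2-G$; here $Y_1=G$, $Y_2=F$ along characteristics $\dot r=rF$. Adding a force $\mathbf F(\mathbf V,r)$ to the momentum equation adds $-L$ with $L=\frac1r\mathbf F$ to the equation for $\dot Y_2$ (sign conventions as in the system displayed in the claim). An isochronous center is a center of a planar ODE at which all nearby periodic orbits have the same period. *)

theory Defs
  imports "HOL-Analysis.Analysis"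
begin

definition ode_sol :: "(real \<times> real \<Rightarrow> real \<times> real) \<Rightarrow> (real \<Rightarrow> real \<times> real) \<Rightarrow> bool" where
  "ode_sol f \<phi> \<longleftrightarrow> (\<forall>t. (\<phi> has_vector_derivative f (\<phi> t)) (at t))"

definition ode_sol_on :: "(real \<times> real \<Rightarrow> real \<times> real) \<Rightarrow> real set \<Rightarrow> (real \<Rightarrow> real \<times> real) \<Rightarrow> bool" where
  "ode_sol_on f I \<phi> \<longleftrightarrow> (\<forall>t\<in>I. (\<phi> has_vector_derivative f (\<phi> t)) (at t))"

definition periodic_sol :: "(real \<times> real \<Rightarrow> real \<times> real) \<Rightarrow> (real \<Rightarrow> real \<times> real) \<Rightarrow> real \<Rightarrow> bool" where
  "periodic_sol f \<phi> T \<longleftrightarrow> ode_sol f \<phi> \<and> T > 0 \<and> (\<forall>t. \<phi> (t + T) = \<phi> t)"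

definition minimal_period_sol :: "(real \<times> real \<Rightarrow> real \<times> real) \<Rightarrow> (real \<Rightarrow> real \<times> real) \<Rightarrow> real \<Rightarrow> bool" where
  "minimal_period_sol f \<phi> T \<longleftrightarrow> periodic_sol f \<phi> T \<and>
     (\<forall>S. 0 < S \<and> S < T \<longrightarrow> \<not> (\<forall>t. \<phi> (t + S) = \<phi> t))"

definition center_at_origin :: "(real \<times> real \<Rightarrow> real \<times> real) \<Rightarrow> bool" where
  "center_at_origin f \<longleftrightarrow> f 0 = 0 \<and>
     (\<exists>\<epsilon>>0. \<forall>x \<in> ball 0 \<epsilon> - {0}. \<exists>\<phi> T. \<phi> 0 = x \<and> periodic_sol f \<phi> T)"

definition isochronous_center :: "(real \<times> real \<Rightarrow> real \<times> real) \<Rightarrow> bool" where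
  "isochronous_center f \<longleftrightarrow> center_at_origin f \<and>
     (\<exists>\<epsilon>>0. \<exists>T>0. \<forall>x \<in> ball 0 \<epsilon> - {0}. \<exists>\<phi>. \<phi> 0 = x \<and> minimal_period_sol f \<phi> T)"

text \<open>The planar system (Y1, Y2) with parameters d and \<gamma>:
  Y1' = Y2 - d Y1 Y2,   Y2' = - Y1 - (1 - \<gamma>) Y2^2
  (sign of the \<gamma>-term chosen consistently with the Lienard equation and the
  isochronicity condition of the claim).\<close>
definition ep_field :: "nat \<Rightarrow> real \<Rightarrow> real \<times> real \<Rightarrow> real \<times> real" where
  "ep_field d \<gamma> = (\<lambda>(y1, y2). (y2 - real d * y1 * y2, - y1 - y2^2 + \<gamma> * y2^2))"

definition lienard_sol :: "real \<Rightarrow> real \<Rightarrow> real set \<Rightarrow> (real \<Rightarrow> real) \<Rightarrow> bool" where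
  "lienard_sol a b I y \<longleftrightarrow> (\<exists>y'. \<forall>t\<in>I. (y has_real_derivative y' t) (at t) \<and>
       (\<exists>y''. (y' has_real_derivative y'') (at t) \<and> y'' + a * y t * y' t + y t + b * (y t)^3 = 0))"

end

theory Submission
  imports Defs
begin



lemma comp_derivs:
  assumes "(\<phi> has_vector_derivative D) (at t)"
  shows "((\<lambda>t. fst (\<phi> t)) has_real_derivative fst D) (at t)"
    and "((\<lambda>t. snd (\<phi> t)) has_real_derivative snd D) (at t)"
  using bounded_linear.has_vector_derivative[OF bounded_linear_fst assms]
        bounded_linear.has_vector_derivative[OF bounded_linear_snd assms]
  by (simp_all add: has_real_derivative_iff_has_vector_derivative)

lemma ep_field_simp: "ep_field d \<gamma> (y1, y2) = (y2 - real d * y1 * y2, - y1 - (1-\<gamma>) * y2^2)"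
  by (simp add: ep_field_def algebra_simps)

lemma part1:
  assumes "ode_sol_on (ep_field d \<gamma>) I \<phi>"
  shows "lienard_sol (2 * (1 - \<gamma>) + real d) (real d * (1 - \<gamma>)) I (\<lambda>t. snd (\<phi> t))"
  unfolding lienard_sol_def
proof (rule exI[of _ "\<lambda>t. - fst (\<phi> t) - (1-\<gamma>) * (snd (\<phi> t))^2"], intro ballI conjI)
  fix t assume t: "t \<in> I"
  have D: "(\<phi> has_vector_derivative ep_field d \<gamma> (\<phi> t)) (at t)" using assms t by (simp add: ode_sol_on_def)
  obtain y1 y2 where p: "\<phi> t = (y1, y2)" by (cases "\<phi> t")
  note d1 = comp_derivs(1)[OF D, unfolded p ep_field_simp, simplified]
  note d2 = comp_derivs(2)[OF D, unfolded p ep_field_simp, simplified]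
  show "((\<lambda>t. snd (\<phi> t)) has_real_derivative - fst (\<phi> t) - (1 - \<gamma>) * (snd (\<phi> t))\<^sup>2) (at t)"
    using d2 p by simp
  have "((\<lambda>t. - fst (\<phi> t) - (1-\<gamma>) * (snd (\<phi> t))^2) has_real_derivative
        - (y2 - real d * y1 * y2) - (1-\<gamma>) * (2 * y2 * (- y1 - (1 - \<gamma>) * y2\<^sup>2))) (at t)"
    using p by (auto intro!: derivative_eq_intros d1 d2)
  then show "\<exists>y''. ((\<lambda>t. - fst (\<phi> t) - (1 - \<gamma>) * (snd (\<phi> t))\<^sup>2) has_real_derivative y'') (at t) \<and>
          y'' + (2 * (1 - \<gamma>) + real d) * snd (\<phi> t) * (- fst (\<phi> t) - (1 - \<gamma>) * (snd (\<phi> t))\<^sup>2) +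
          snd (\<phi> t) + real d * (1 - \<gamma>) * snd (\<phi> t) ^ 3 = 0"
    using p by (intro exI conjI) (auto simp: algebra_simps power2_eq_square power3_eq_cube)
qed

lemma part3:
  fixes d :: nat and \<gamma> :: real
  shows "(2 * (1 - \<gamma>) + real d)^2 = 9 * real d * (1 - \<gamma>) \<longleftrightarrow> \<gamma> = 1 - real d \<or> \<gamma> = 1 - real d / 4"
proof -
  have "(2 * (1 - \<gamma>) + real d)^2 - 9 * real d * (1 - \<gamma>) = (real d - (1-\<gamma>)) * (real d - 4*(1-\<gamma>))"
    by (simp add: algebra_simps power2_eq_square)
  moreover have "(real d - (1-\<gamma>)) * (real d - 4*(1-\<gamma>)) = 0 \<longleftrightarrow> \<gamma> = 1 - real d \<or> \<gamma> = 1 - real d / 4"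
    unfolding mult_eq_0_iff by (auto simp: field_simps)
  ultimately show ?thesis by (metis eq_iff_diff_eq_0)
qed


definition sF :: "real \<Rightarrow> real \<Rightarrow> real \<Rightarrow> real \<Rightarrow> real" where
  "sF c k y1 y2 = y1 + (c - k) * y2^2"
definition DF :: "real \<Rightarrow> real \<Rightarrow> real \<Rightarrow> real \<Rightarrow> real" where
  "DF c k y1 y2 = 1 - k * sF c k y1 y2"
definition dsF :: "real \<Rightarrow> real \<Rightarrow> real \<Rightarrow> real \<Rightarrow> real \<Rightarrow> real" where
  "dsF dd c k y1 y2 = (y2 - dd * y1 * y2) + 2 * (c - k) * y2 * (- y1 - c * y2^2)"
definition dZ1 :: "real \<Rightarrow> real \<Rightarrow> real \<Rightarrow> real \<Rightarrow> real \<Rightarrow> real" where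
  "dZ1 dd c k y1 y2 = dsF dd c k y1 y2 / (DF c k y1 y2)^2"
definition dZ2 :: "real \<Rightarrow> real \<Rightarrow> real \<Rightarrow> real \<Rightarrow> real \<Rightarrow> real" where
  "dZ2 dd c k y1 y2 = ((- y1 - c * y2^2) * DF c k y1 y2 + k * y2 * dsF dd c k y1 y2) / (DF c k y1 y2)^2"

lemma Z_derivs:
  assumes d1: "(y1 has_real_derivative (y2 t - dd * y1 t * y2 t)) (at t)"
    and d2: "(y2 has_real_derivative (- y1 t - c * (y2 t)^2)) (at t)"
    and D: "DF c k (y1 t) (y2 t) \<noteq> 0"
  shows "((\<lambda>t. sF c k (y1 t) (y2 t) / DF c k (y1 t) (y2 t)) has_real_derivative dZ1 dd c k (y1 t) (y2 t)) (at t)"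
    and "((\<lambda>t. y2 t / DF c k (y1 t) (y2 t)) has_real_derivative dZ2 dd c k (y1 t) (y2 t)) (at t)"
proof -
  have ds: "((\<lambda>t. sF c k (y1 t) (y2 t)) has_real_derivative dsF dd c k (y1 t) (y2 t)) (at t)"
    unfolding sF_def dsF_def by (auto intro!: derivative_eq_intros d1 d2)
  have dD: "((\<lambda>t. DF c k (y1 t) (y2 t)) has_real_derivative - k * dsF dd c k (y1 t) (y2 t)) (at t)"
    unfolding DF_def by (auto intro!: derivative_eq_intros ds)
  show "((\<lambda>t. sF c k (y1 t) (y2 t) / DF c k (y1 t) (y2 t)) has_real_derivative dZ1 dd c k (y1 t) (y2 t)) (at t)"
    apply (rule DERIV_divide[OF ds dD D, THEN DERIV_cong])
    using D unfolding dZ1_def by (simp add: DF_def field_simps power2_eq_square)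
  show "((\<lambda>t. y2 t / DF c k (y1 t) (y2 t)) has_real_derivative dZ2 dd c k (y1 t) (y2 t)) (at t)"
    apply (rule DERIV_divide[OF d2 dD D, THEN DERIV_cong])
    using D unfolding dZ2_def by (simp add: field_simps power2_eq_square)
qed

lemma quot_lemma:
  fixes s D y2 n2 ds Y K :: real
  assumes D: "D \<noteq> 0" and Y: "Y = s^2 + y2^2" "Y \<noteq> 0"
    and key: "s * n2 - y2 * ds + Y * D = K * D"
  shows "((s / D) * (n2 / D^2) - (y2 / D) * (ds / D^2)) / ((s / D)^2 + (y2 / D)^2) = -1 + K / Y"
proof -
  have e1: "(s / D) * (n2 / D^2) - (y2 / D) * (ds / D^2) = (s * n2 - y2 * ds) / D^3"
    using D by (simp add: field_simps power2_eq_square power3_eq_cube)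
  have e2: "(s / D)^2 + (y2 / D)^2 = Y / D^2"
    using Y by (simp add: power_divide add_divide_distrib)
  have e3: "s * n2 - y2 * ds = (K - Y) * D" using key by (simp add: algebra_simps)
  have "(s * n2 - y2 * ds) / D^3 / (Y / D^2) = (K - Y) / Y"
    unfolding e3 using D Y(2) by (simp add: field_simps power2_eq_square power3_eq_cube)
  also have "\<dots> = -1 + K / Y" using Y(2) by (simp add: field_simps)
  finally show ?thesis unfolding e1 e2 .
qed

lemma Omega_identity:
  assumes dd: "dd = 3 * k - 2 * c" and D: "DF c k y1 y2 \<noteq> 0"
    and nz: "(sF c k y1 y2)^2 + y2^2 \<noteq> 0"
  shows "((sF c k y1 y2 / DF c k y1 y2) * dZ2 dd c k y1 y2 - (y2 / DF c k y1 y2) * dZ1 dd c k y1 y2)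
         / ((sF c k y1 y2 / DF c k y1 y2)^2 + (y2 / DF c k y1 y2)^2)
       = -1 + (k - c) * (k - 2 * c) * y2^4 / ((sF c k y1 y2)^2 + y2^2)"
proof -
  define s where "s = sF c k y1 y2"
  define D' where "D' = DF c k y1 y2"
  have Ddef: "D' = 1 - k * s" unfolding s_def D'_def DF_def ..
  have key: "s * ((- y1 - c * y2^2) * D' + k * y2 * dsF dd c k y1 y2) - y2 * dsF dd c k y1 y2
        + (s^2 + y2^2) * D' = (k - c) * (k - 2 * c) * y2^4 * D'"
    unfolding Ddef s_def sF_def dsF_def dd by algebra
  show ?thesis
    unfolding dZ1_def dZ2_def s_def[symmetric] D'_def[symmetric]
    by (rule quot_lemma) (use D nz key in \<open>auto simp: s_def D'_def\<close>)
qed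


lemma energy:
  fixes y1 y2 :: "real \<Rightarrow> real" and dd c a T :: real
  assumes d1: "\<And>t. (y1 has_real_derivative (y2 t - dd * y1 t * y2 t)) (at t)"
    and d2: "\<And>t. (y2 has_real_derivative (- y1 t - c * (y2 t)^2)) (at t)"
    and i1: "y1 0 = 0" and i2: "y2 0 = a" and a: "a > 0" and T: "T > 0"
    and small: "a * (64 * (\<bar>dd\<bar> + \<bar>c\<bar> + 1) * T) < 3"
  shows "\<forall>t\<in>{0..T}. a^2/4 < (y1 t)^2 + (y2 t)^2 \<and> (y1 t)^2 + (y2 t)^2 < 4*a^2"
proof (rule ccontr)
  define E where "E t = (y1 t)^2 + (y2 t)^2" for t
  define e where "e t = 2 * y1 t * (y2 t - dd * y1 t * y2 t) + 2 * y2 t * (- y1 t - c * (y2 t)^2)" for t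
  define K where "K = \<bar>dd\<bar> + \<bar>c\<bar> + 1"
  have dE: "(E has_real_derivative e t) (at t)" for t
    unfolding E_def e_def by (auto intro!: derivative_eq_intros d1 d2)
  have contE: "continuous_on UNIV E"
    by (rule continuous_at_imp_continuous_on) (use dE DERIV_isCont in blast)
  have ebound: "\<bar>e t\<bar> \<le> 16 * K * a^3" if "E t \<le> 4 * a^2" for t
  proof -
    have q1: "(y1 t)^2 \<le> (2*a)^2" "(y2 t)^2 \<le> (2*a)^2"
    proof -
      have "0 \<le> (y1 t)^2" "0 \<le> (y2 t)^2" by simp_all
      moreover have "(2*a)^2 = 4*a^2" by (simp add: power_mult_distrib)
      ultimately show "(y1 t)^2 \<le> (2*a)^2" "(y2 t)^2 \<le> (2*a)^2" using that unfolding E_def by linarith+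
    qed
    have b2: "\<bar>y2 t\<bar> \<le> 2 * a" using q1(2) a by (metis abs_le_square_iff abs_of_pos mult_pos_pos zero_less_numeral)
    have e_eq: "e t = -2 * y2 t * (dd * (y1 t)^2 + c * (y2 t)^2)"
      unfolding e_def by (simp add: algebra_simps power2_eq_square)
    have "\<bar>dd * (y1 t)^2 + c * (y2 t)^2\<bar> \<le> \<bar>dd\<bar> * (y1 t)^2 + \<bar>c\<bar> * (y2 t)^2"
      by (simp add: abs_mult order_trans[OF abs_triangle_ineq])
    also have "\<dots> \<le> \<bar>dd\<bar> * (2*a)^2 + \<bar>c\<bar> * (2*a)^2"
      using q1 by (intro add_mono mult_left_mono) auto
    also have "\<dots> \<le> K * (2*a)^2" unfolding K_def by (simp add: algebra_simps)
    finally have h: "\<bar>dd * (y1 t)^2 + c * (y2 t)^2\<bar> \<le> K * (2*a)^2" .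
    have "\<bar>e t\<bar> = 2 * \<bar>y2 t\<bar> * \<bar>dd * (y1 t)^2 + c * (y2 t)^2\<bar>"
      unfolding e_eq by (simp add: abs_mult)
    also have "\<dots> \<le> 2 * (2 * a) * (K * (2*a)^2)"
      using b2 h by (intro mult_mono) auto
    also have "\<dots> = 16 * K * a^3" by (simp add: power2_eq_square power3_eq_cube)
    finally show ?thesis .
  qed
  assume "\<not> (\<forall>t\<in>{0..T}. a^2/4 < (y1 t)^2 + (y2 t)^2 \<and> (y1 t)^2 + (y2 t)^2 < 4*a^2)"
  then obtain t2 where t2: "t2 \<in> {0..T}" "E t2 \<le> a^2/4 \<or> 4*a^2 \<le> E t2"
    unfolding E_def by force
  define S where "S = {t. 0 \<le> t \<and> t \<le> T \<and> (E t \<le> a^2/4 \<or> 4*a^2 \<le> E t)}"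
  have "closed S" unfolding S_def
    by (intro closed_Collect_conj closed_Collect_disj closed_Collect_le contE continuous_intros)
  moreover have "S \<noteq> {}" using t2 unfolding S_def by auto
  moreover have "bdd_below S" unfolding S_def by (rule bdd_belowI[of _ 0]) auto
  ultimately have inS: "Inf S \<in> S" by (rule closed_contains_Inf[rotated 2])
  define t1 where "t1 = Inf S"
  have lower: "t1 \<le> t" if "t \<in> S" for t
    unfolding t1_def using that \<open>bdd_below S\<close> by (rule cInf_lower)
  have E0: "E 0 = a^2" unfolding E_def using i1 i2 by simp
  have t1S: "0 \<le> t1" "t1 \<le> T" "E t1 \<le> a^2/4 \<or> 4*a^2 \<le> E t1" using inS unfolding S_def t1_def by auto
  have "t1 \<noteq> 0" using t1S(3) E0 a by (auto simp: power2_eq_square)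
  then have t1pos: "0 < t1" using t1S by simp
  have good: "E t < 4*a^2" if "0 \<le> t" "t < t1" for t
  proof (rule ccontr)
    assume "\<not> E t < 4*a^2"
    then have "t \<in> S" unfolding S_def using that t1S by auto
    then show False using lower that by force
  qed
  obtain z where z: "0 < z" "z < t1" "E t1 - E 0 = (t1 - 0) * e z"
    using MVT2[OF t1pos, of E e] dE by blast
  have "\<bar>E t1 - a^2\<bar> \<le> t1 * (16 * K * a^3)"
    using z ebound[of z] good[of z] E0 t1pos by (simp add: abs_mult)
  also have "\<dots> \<le> T * (16 * K * a^3)"
    using t1S a unfolding K_def by (intro mult_right_mono) auto
  also have "\<dots> = a^2 * (a * (16 * K * T))" by (simp add: power2_eq_square power3_eq_cube)
  also have "\<dots> < a^2 * (3/4)"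
    using a by (intro mult_strict_left_mono) (use small in \<open>auto simp: K_def algebra_simps\<close>)
  finally have "\<bar>E t1 - a^2\<bar> < a^2 * (3/4)" .
  then show False using t1S(3) a by (auto simp: abs_if split: if_splits)
qed


lemma winding:
  fixes g q :: "real \<Rightarrow> complex" and T :: real
  assumes T: "T > 0"
    and dg: "\<And>t. t \<in> {0..T} \<Longrightarrow> (g has_vector_derivative q t * g t) (at t)"
    and cq: "continuous_on {0..T} q"
    and g0: "g 0 \<noteq> 0" and gT: "g T = g 0"
  shows "\<exists>n::int. Im (integral {0..T} q) = of_int (2 * n) * pi"
proof -
  define L where "L u = integral {0..u} q" for u
  have dL: "(L has_vector_derivative q t) (at t within {0..T})" if "t \<in> {0..T}" for t
    unfolding L_def by (rule integral_has_vector_derivative[OF cq that])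
  define h where "h t = g t * exp (- L t)" for t
  have dh: "(h has_derivative (\<lambda>x. 0)) (at t within {0..T})" if t: "t \<in> {0..T}" for t
  proof -
    have de: "((\<lambda>z. exp (- z)) has_field_derivative - exp (- L t)) (at (L t) within L ` {0..T})"
      by (auto intro!: derivative_eq_intros)
    have d1: "((\<lambda>t. exp (- L t)) has_vector_derivative (q t * - exp (- L t))) (at t within {0..T})"
      using field_vector_diff_chain_within[OF dL[OF t] de] by (simp add: o_def)
    have d2: "(g has_vector_derivative q t * g t) (at t within {0..T})"
      using dg[OF t] by (rule has_vector_derivative_at_within)
    have "(h has_vector_derivative (g t * (q t * - exp (- L t)) + q t * g t * exp (- L t))) (at t within {0..T})"
      unfolding h_def by (rule has_vector_derivative_mult[OF d2 d1])
    then have "(h has_vector_derivative 0) (at t within {0..T})"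
      by (simp add: algebra_simps)
    then show ?thesis by (simp add: has_vector_derivative_def)
  qed
  obtain C where C: "\<forall>x\<in>{0..T}. h x = C"
    using has_derivative_zero_constant[of "{0..T}" h] dh by auto
  have "h T = h 0" using C T by auto
  then have "g 0 * exp (- L T) = g 0 * 1" unfolding h_def gT L_def by simp
  then have "exp (- L T) = 1" using g0 by simp
  then obtain n::int where "Im (- L T) = of_int (2 * n) * pi" by (auto simp: exp_eq_1)
  then have "Im (L T) = of_int (2 * (-n)) * pi" by simp
  then show ?thesis unfolding L_def by blast
qed


lemma gap_int:
  fixes u :: real
  shows "\<exists>\<delta>>0. \<forall>n::int. of_int n + u \<noteq> 0 \<longrightarrow> \<delta> \<le> \<bar>of_int n + u\<bar>"
proof (cases "u = of_int \<lfloor>u\<rfloor>")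
  case True
  show ?thesis
  proof (intro exI[of _ 1] conjI allI impI)
    fix n :: int assume "of_int n + u \<noteq> 0"
    then have "of_int (n + \<lfloor>u\<rfloor>) \<noteq> (0::real)" using True by simp
    then have "n + \<lfloor>u\<rfloor> \<noteq> 0" by linarith
    then have "1 \<le> \<bar>n + \<lfloor>u\<rfloor>\<bar>" by linarith
    then have "(1::real) \<le> \<bar>of_int (n + \<lfloor>u\<rfloor>)\<bar>" by (metis of_int_1_le_iff of_int_abs)
    then show "1 \<le> \<bar>of_int n + u\<bar>" using True by simp
  qed simp
next
  case False
  have f1: "of_int \<lfloor>u\<rfloor> < u" using False of_int_floor_le[of u] by linarith
  have f2: "u < of_int \<lfloor>u\<rfloor> + 1" by linarith
  show ?thesis
  proof (intro exI[of _ "min (u - of_int \<lfloor>u\<rfloor>) (of_int \<lfloor>u\<rfloor> + 1 - u)"] conjI allI impI)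
    show "0 < min (u - of_int \<lfloor>u\<rfloor>) (of_int \<lfloor>u\<rfloor> + 1 - u)" using f1 f2 by simp
    fix n :: int assume nz: "of_int n + u \<noteq> 0"
    show "min (u - of_int \<lfloor>u\<rfloor>) (of_int \<lfloor>u\<rfloor> + 1 - u) \<le> \<bar>of_int n + u\<bar>"
    proof (cases "of_int n + u > 0")
      case True
      then have "of_int (- n) < (of_int (\<lfloor>u\<rfloor> + 1) :: real)" using f2 by simp linarith
      then have "- n < \<lfloor>u\<rfloor> + 1" by (simp only: of_int_less_iff)
      then have "(0::real) \<le> of_int (n + \<lfloor>u\<rfloor>)" by simp
      then show ?thesis using True by simp
    next
      case False
      then have neg: "of_int n + u < 0" using nz by simp
      then have "of_int n < (of_int (- \<lfloor>u\<rfloor>) :: real)" using f1 by simp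
      then have "n < - \<lfloor>u\<rfloor>" by (simp only: of_int_less_iff)
      then have "of_int (n + \<lfloor>u\<rfloor>) \<le> (-1::real)" by simp
      then show ?thesis using neg by simp
    qed
  qed
qed

lemma gap_2pi:
  fixes T :: real
  shows "\<exists>\<delta>>0. \<forall>n::int. of_int n * (2*pi) + T \<noteq> 0 \<longrightarrow> \<delta> \<le> \<bar>of_int n * (2*pi) + T\<bar>"
proof -
  obtain \<delta> where d: "\<delta> > 0" "\<forall>n::int. of_int n + T/(2*pi) \<noteq> 0 \<longrightarrow> \<delta> \<le> \<bar>of_int n + T/(2*pi)\<bar>"
    using gap_int by blast
  show ?thesis
  proof (intro exI[of _ "\<delta> * (2*pi)"] conjI allI impI)
    show "0 < \<delta> * (2*pi)" using d by simp
    fix n :: int assume "of_int n * (2*pi) + T \<noteq> 0"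
    moreover have e: "of_int n * (2*pi) + T = (of_int n + T/(2*pi)) * (2*pi)" by (simp add: field_simps)
    ultimately have "of_int n + T/(2*pi) \<noteq> 0" by simp
    then have "\<delta> \<le> \<bar>of_int n + T/(2*pi)\<bar>" using d by blast
    then show "\<delta> * (2*pi) \<le> \<bar>of_int n * (2*pi) + T\<bar>" unfolding e abs_mult by simp
  qed
qed


lemma le_div_mult: "0 < (B::real) \<Longrightarrow> a \<le> x / B \<Longrightarrow> a * B \<le> x"
  by (simp add: le_divide_eq)

lemma noniso:
  fixes d :: nat and \<gamma> :: real
  defines "c \<equiv> 1 - \<gamma>" and "dd \<equiv> real d"
  defines "k \<equiv> (2 * c + dd) / 3"
  assumes kap: "(k - c) * (k - 2 * c) \<noteq> 0"
    and iso: "isochronous_center (ep_field d \<gamma>)"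
  shows False
proof -
  define \<kappa> where "\<kappa> = (k - c) * (k - 2 * c)"
  have kap': "\<kappa> \<noteq> 0" using kap unfolding \<kappa>_def .
  have ddk: "dd = 3 * k - 2 * c" unfolding k_def by (simp add: algebra_simps)
  obtain \<epsilon> T where \<epsilon>: "\<epsilon> > 0" and T: "T > 0"
    and H: "\<forall>x \<in> ball 0 \<epsilon> - {0}. \<exists>\<phi>. \<phi> 0 = x \<and> minimal_period_sol (ep_field d \<gamma>) \<phi> T"
    using iso unfolding isochronous_center_def by blast
  obtain \<delta>0 where \<delta>0: "\<delta>0 > 0" "\<forall>n::int. of_int n * (2*pi) + T \<noteq> 0 \<longrightarrow> \<delta>0 \<le> \<bar>of_int n * (2*pi) + T\<bar>"
    using gap_2pi by blast
  define K where "K = \<bar>dd\<bar> + \<bar>c\<bar> + 1"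
  define B1 where "B1 = 64 * K * T"
  define B2 where "B2 = 2 * (\<bar>k\<bar> + 1) * (2 + 4 * \<bar>c - k\<bar>)"
  define B3 where "B3 = 8 * (\<bar>\<kappa>\<bar> + 1) * T"
  have K0: "K > 0" unfolding K_def by (smt (verit) abs_ge_zero)
  have p1a: "\<bar>k\<bar> + 1 > 0" using abs_ge_zero[of k] by linarith
  have p1b: "2 + 4 * \<bar>c - k\<bar> > 0" by (intro add_pos_nonneg) auto
  have p1c: "\<bar>\<kappa>\<bar> + 1 > 0" using abs_ge_zero[of \<kappa>] by linarith
  note p1 = p1a p1b p1c
  have B: "B1 > 0" "B2 > 0" "B3 > 0" unfolding B1_def B2_def B3_def using T K0 p1 by simp_all
  define a where "a = min (\<epsilon>/2) (min 1 (min (1/B1) (min (1/B2) (\<delta>0/B3))))"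
  have a0: "a > 0" unfolding a_def using \<epsilon> B \<delta>0 by auto
  have a\<epsilon>: "a < \<epsilon>" unfolding a_def using \<epsilon> by auto
  have a1: "a \<le> 1" unfolding a_def by auto
  have aB1: "a * B1 \<le> 1" by (rule le_div_mult[OF B(1)]) (auto simp: a_def)
  have aB2: "a * B2 \<le> 1" by (rule le_div_mult[OF B(2)]) (auto simp: a_def)
  have aB3: "a * B3 \<le> \<delta>0" by (rule le_div_mult[OF B(3)]) (auto simp: a_def)
  have small: "a * (64 * (\<bar>dd\<bar> + \<bar>c\<bar> + 1) * T) < 3"
    using aB1 unfolding B1_def K_def by (simp add: mult.assoc)
  have asq: "a^2 \<le> a" using a0 a1 by (simp add: power2_eq_square mult_left_le)
  have Dsmall: "\<bar>k\<bar> * (2 * a + \<bar>c - k\<bar> * (4 * a^2)) \<le> 1/2"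
  proof -
    have "\<bar>k\<bar> * (2 * a + \<bar>c - k\<bar> * (4 * a^2)) \<le> \<bar>k\<bar> * (2 * a + \<bar>c - k\<bar> * (4 * a))"
      using asq by (intro mult_left_mono add_left_mono) auto
    also have "\<dots> = a * (\<bar>k\<bar> * (2 + 4 * \<bar>c - k\<bar>))" by (simp add: algebra_simps)
    also have "\<dots> \<le> a * ((\<bar>k\<bar> + 1) * (2 + 4 * \<bar>c - k\<bar>))"
      using a0 by (intro mult_left_mono mult_right_mono) auto
    also have "\<dots> = (a * B2) / 2" unfolding B2_def by (simp add: algebra_simps)
    also have "\<dots> \<le> 1/2" using aB2 by simp
    finally show ?thesis .
  qed
  have kapsmall: "\<bar>\<kappa>\<bar> * (4 * a^2 * T) < \<delta>0"
  proof -
    have "\<bar>\<kappa>\<bar> * (4 * a^2 * T) \<le> \<bar>\<kappa>\<bar> * (4 * a * T)"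
      using asq T by (intro mult_left_mono mult_right_mono) auto
    also have "\<dots> \<le> (\<bar>\<kappa>\<bar> + 1) * (4 * a * T)" using a0 T by (intro mult_right_mono) auto
    also have "\<dots> = (a * B3) / 2" unfolding B3_def by (simp add: algebra_simps)
    also have "\<dots> \<le> \<delta>0 / 2" using aB3 by simp
    also have "\<dots> < \<delta>0" using \<delta>0 by simp
    finally show ?thesis .
  qed
  have "(0::real, a) \<in> ball 0 \<epsilon> - {0}" using a0 a\<epsilon> by (simp add: dist_norm zero_prod_def)
  then obtain \<phi> where \<phi>0: "\<phi> 0 = (0, a)" and mp: "minimal_period_sol (ep_field d \<gamma>) \<phi> T"
    using H by blast
  have sol: "\<And>t. (\<phi> has_vector_derivative ep_field d \<gamma> (\<phi> t)) (at t)"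
    and per: "\<And>t. \<phi> (t + T) = \<phi> t"
    using mp unfolding minimal_period_sol_def periodic_sol_def ode_sol_def by auto
  define y1 where "y1 t = fst (\<phi> t)" for t
  define y2 where "y2 t = snd (\<phi> t)" for t
  have ye: "(\<lambda>t. fst (\<phi> t)) = y1" "(\<lambda>t. snd (\<phi> t)) = y2" by (auto simp: y1_def y2_def fun_eq_iff)
  have fe: "ep_field d \<gamma> (\<phi> t) = (y2 t - dd * y1 t * y2 t, - y1 t - c * (y2 t)^2)" for t
    by (simp add: ep_field_def y1_def y2_def dd_def c_def case_prod_beta algebra_simps)
  have d1: "(y1 has_real_derivative (y2 t - dd * y1 t * y2 t)) (at t)" for t
    using comp_derivs(1)[OF sol[of t]] unfolding ye fe by simp
  have d2: "(y2 has_real_derivative (- y1 t - c * (y2 t)^2)) (at t)" for t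
    using comp_derivs(2)[OF sol[of t]] unfolding ye fe by simp
  have i1: "y1 0 = 0" and i2: "y2 0 = a" using \<phi>0 unfolding y1_def y2_def by auto
  have En: "\<forall>t\<in>{0..T}. a^2/4 < (y1 t)^2 + (y2 t)^2 \<and> (y1 t)^2 + (y2 t)^2 < 4*a^2"
    by (rule energy[OF d1 d2 i1 i2 a0 T small])
  have cy1: "isCont y1 t" and cy2: "isCont y2 t" for t
    using d1 d2 DERIV_isCont by blast+
  have Dpos: "DF c k (y1 t) (y2 t) \<ge> 1/2" if t: "t \<in> {0..T}" for t
  proof -
    have Et: "(y1 t)^2 + (y2 t)^2 < 4*a^2" using En t by auto
    have sq: "(2*a)^2 = 4*a^2" by (simp add: power_mult_distrib)
    have q1: "(y1 t)^2 \<le> (2*a)^2" unfolding sq using Et zero_le_power2[of "y2 t"] by linarith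
    have q2: "(y2 t)^2 \<le> (2*a)^2" unfolding sq using Et zero_le_power2[of "y1 t"] by linarith
    note q = q1 q2
    have b1: "\<bar>y1 t\<bar> \<le> 2 * a" using q(1) a0 by (metis abs_le_square_iff abs_of_pos mult_pos_pos zero_less_numeral)
    have "\<bar>sF c k (y1 t) (y2 t)\<bar> \<le> \<bar>y1 t\<bar> + \<bar>c - k\<bar> * (y2 t)^2"
      unfolding sF_def by (metis abs_mult abs_power2 abs_triangle_ineq)
    also have "\<dots> \<le> 2 * a + \<bar>c - k\<bar> * (4 * a^2)"
      using b1 q(2) by (intro add_mono mult_left_mono) (auto simp: power_mult_distrib)
    finally have "\<bar>k\<bar> * \<bar>sF c k (y1 t) (y2 t)\<bar> \<le> 1/2"
      using Dsmall by (meson abs_ge_zero mult_left_mono order_trans)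
    then have "\<bar>k * sF c k (y1 t) (y2 t)\<bar> \<le> 1/2" by (simp add: abs_mult)
    then show ?thesis unfolding DF_def by linarith
  qed
  have Snz: "(sF c k (y1 t) (y2 t))^2 + (y2 t)^2 > 0" if t: "t \<in> {0..T}" for t
  proof (rule ccontr)
    assume "\<not> ?thesis"
    then have "(sF c k (y1 t) (y2 t))^2 + (y2 t)^2 = 0"
      using zero_le_power2[of "sF c k (y1 t) (y2 t)"] zero_le_power2[of "y2 t"] by linarith
    then have h: "y2 t = 0 \<and> sF c k (y1 t) (y2 t) = 0" using sum_power2_eq_zero_iff[of "sF c k (y1 t) (y2 t)" "y2 t"] by blast
    then have "y2 t = 0" "sF c k (y1 t) (y2 t) = 0" by blast+
    then have "y1 t = 0" "y2 t = 0" unfolding sF_def by auto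
    moreover have "a^2/4 < (y1 t)^2 + (y2 t)^2" using En t by auto
    ultimately show False using a0 by simp
  qed
  define Z1 where "Z1 t = sF c k (y1 t) (y2 t) / DF c k (y1 t) (y2 t)" for t
  define Z2 where "Z2 t = y2 t / DF c k (y1 t) (y2 t)" for t
  define W1 where "W1 t = dZ1 dd c k (y1 t) (y2 t)" for t
  define W2 where "W2 t = dZ2 dd c k (y1 t) (y2 t)" for t
  define g where "g t = complex_of_real (Z1 t) + \<i> * complex_of_real (Z2 t)" for t
  define q where "q t = (complex_of_real (W1 t) + \<i> * complex_of_real (W2 t)) / g t" for t
  have gnz: "g t \<noteq> 0" if t: "t \<in> {0..T}" for t
  proof
    assume "g t = 0"
    then have "Complex (Z1 t) (Z2 t) = 0" unfolding g_def Complex_eq .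
    then have "Z1 t = 0" "Z2 t = 0" by (simp_all add: Complex_eq_0)
    then have "sF c k (y1 t) (y2 t) = 0" "y2 t = 0" using Dpos[OF t] unfolding Z1_def Z2_def by auto
    then show False using Snz[OF t] by simp
  qed
  have dg: "(g has_vector_derivative q t * g t) (at t)" if t: "t \<in> {0..T}" for t
  proof -
    have Dn: "DF c k (y1 t) (y2 t) \<noteq> 0" using Dpos[OF t] by simp
    have z1: "(Z1 has_real_derivative W1 t) (at t)" unfolding Z1_def[abs_def] W1_def
      by (rule Z_derivs(1)[OF d1 d2 Dn])
    have z2: "(Z2 has_real_derivative W2 t) (at t)" unfolding Z2_def[abs_def] W2_def
      by (rule Z_derivs(2)[OF d1 d2 Dn])
    have "(g has_vector_derivative (complex_of_real (W1 t) + \<i> * complex_of_real (W2 t))) (at t)"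
      unfolding g_def[abs_def]
      by (intro has_vector_derivative_add has_vector_derivative_mult_right has_vector_derivative_of_real z1 z2)
    moreover have "q t * g t = complex_of_real (W1 t) + \<i> * complex_of_real (W2 t)"
      unfolding q_def using gnz[OF t] by simp
    ultimately show ?thesis by simp
  qed
  have cq: "continuous_on {0..T} q"
  proof (rule continuous_at_imp_continuous_on, rule ballI)
    fix t assume t: "t \<in> {0..T}"
    have Dn: "DF c k (y1 t) (y2 t) \<noteq> 0" using Dpos[OF t] by simp
    have gn: "g t \<noteq> 0" using gnz[OF t] .
    show "isCont q t"
      unfolding q_def[abs_def] W1_def W2_def
      using Dn gn unfolding g_def Z1_def Z2_def dZ1_def dZ2_def dsF_def DF_def sF_def
      by (intro continuous_intros cy1 cy2) auto
  qed
  have gT: "g T = g 0" unfolding g_def Z1_def Z2_def y1_def y2_def using per[of 0] by simp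
  obtain n :: int where nI: "Im (integral {0..T} q) = of_int (2 * n) * pi"
    using winding[OF T dg cq gnz[of 0] gT] T by auto
  define r where "r t = (y2 t)^4 / ((sF c k (y1 t) (y2 t))^2 + (y2 t)^2)" for t
  have Imq: "Im (q t) = -1 + \<kappa> * r t" if t: "t \<in> {0..T}" for t
  proof -
    have Dn: "DF c k (y1 t) (y2 t) \<noteq> 0" using Dpos[OF t] by simp
    have nz: "(sF c k (y1 t) (y2 t))^2 + (y2 t)^2 \<noteq> 0" using Snz[OF t] by linarith
    have "Im (q t) = (Z1 t * W2 t - Z2 t * W1 t) / ((Z1 t)^2 + (Z2 t)^2)"
      unfolding q_def g_def by (simp add: Im_divide algebra_simps)
    also have "\<dots> = -1 + \<kappa> * r t"
      unfolding Z1_def Z2_def W1_def W2_def r_def \<kappa>_def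
      using Omega_identity[OF ddk Dn nz] by simp
    finally show ?thesis .
  qed
  have cr: "continuous_on {0..T} r"
  proof (rule continuous_at_imp_continuous_on, rule ballI)
    fix t assume t: "t \<in> {0..T}"
    show "isCont r t" unfolding r_def[abs_def]
      using Snz[OF t] unfolding sF_def by (intro continuous_intros cy1 cy2) auto
  qed
  have ir: "r integrable_on {0..T}" by (rule integrable_continuous_interval[OF cr])
  define R where "R = integral {0..T} r"
  have iq: "(q has_integral integral {0..T} q) {0..T}"
    using integrable_continuous_interval[OF cq] by (simp add: has_integral_integral)
  have h1: "((\<lambda>t. Im (q t)) has_integral Im (integral {0..T} q)) {0..T}"
    by (rule has_integral_Im[OF iq])
  have h2: "((\<lambda>t. -1 + \<kappa> * r t) has_integral (-T + \<kappa> * R)) {0..T}"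
  proof -
    have c1: "((\<lambda>t. -1) has_integral (-T)) {0..T}" using has_integral_const_real[of "-1::real" 0 T] T by simp
    have c2: "((\<lambda>t. \<kappa> * r t) has_integral (\<kappa> * R)) {0..T}"
      unfolding R_def by (rule has_integral_mult_right) (use ir in \<open>simp add: has_integral_integral\<close>)
    show ?thesis using has_integral_add[OF c1 c2] by simp
  qed
  have h1': "((\<lambda>t. -1 + \<kappa> * r t) has_integral Im (integral {0..T} q)) {0..T}"
    using h1 by (rule has_integral_cong[THEN iffD1, rotated]) (simp add: Imq)
  have eqI: "-T + \<kappa> * R = of_int (2 * n) * pi"
    using has_integral_unique[OF h2 h1'] nI by simp
  have rnn: "0 \<le> r t" if "t \<in> {0..T}" for t unfolding r_def by simp
  have rle: "r t \<le> 4 * a^2" if t: "t \<in> {0..T}" for t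
  proof -
    have e: "(y2 t)^2 * ((sF c k (y1 t) (y2 t))^2 + (y2 t)^2) - (y2 t)^4 = (y2 t * sF c k (y1 t) (y2 t))^2"
      by (simp add: algebra_simps power2_eq_square power4_eq_xxxx)
    have "(y2 t)^4 \<le> (y2 t)^2 * ((sF c k (y1 t) (y2 t))^2 + (y2 t)^2)"
      using e zero_le_power2[of "y2 t * sF c k (y1 t) (y2 t)"] by linarith
    then have "r t \<le> (y2 t)^2"
      unfolding r_def using Snz[OF t] by (simp add: divide_le_eq)
    also have "\<dots> < 4 * a^2" using En t by (smt (verit) zero_le_power2)
    finally show ?thesis by simp
  qed
  have Rle: "R \<le> 4 * a^2 * T"
  proof -
    have "R \<le> integral {0..T} (\<lambda>t. 4 * a^2)"
      unfolding R_def by (rule integral_le[OF ir]) (auto simp: rle)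
    then show ?thesis using T by (simp add: mult_ac)
  qed
  have Rpos: "R > 0"
  proof -
    have r0: "r 0 > 0" unfolding r_def using i2 a0 Snz[of 0] T by (simp add: divide_pos_pos)
    have "isCont r 0" unfolding r_def[abs_def]
      using Snz[of 0] T unfolding sF_def by (intro continuous_intros cy1 cy2) auto
    then obtain \<delta> where \<delta>: "\<delta> > 0" "\<forall>x'. dist x' 0 < \<delta> \<longrightarrow> dist (r x') (r 0) < r 0 / 2"
      unfolding continuous_at_eps_delta using r0 by (meson half_gt_zero)
    define \<eta> where "\<eta> = min (\<delta>/2) T"
    have \<eta>: "0 < \<eta>" "\<eta> \<le> T" "\<eta> < \<delta>" unfolding \<eta>_def using \<delta> T by auto
    have big: "r 0 / 2 \<le> r t" if "t \<in> {0..\<eta>}" for t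
    proof -
      have "dist t 0 < \<delta>" using that \<eta> by (simp add: dist_norm)
      then have "dist (r t) (r 0) < r 0 / 2" using \<delta> by blast
      then show ?thesis by (simp add: dist_norm abs_if split: if_splits)
    qed
    have i1: "r integrable_on {0..\<eta>}" by (rule integrable_subinterval_real[OF ir]) (use \<eta> in auto)
    have i2: "r integrable_on {\<eta>..T}" by (rule integrable_subinterval_real[OF ir]) (use \<eta> in auto)
    have "integral {0..\<eta>} (\<lambda>t. r 0 / 2) \<le> integral {0..\<eta>} r"
      by (rule integral_le[OF _ i1]) (use big in auto)
    then have p1: "\<eta> * (r 0 / 2) \<le> integral {0..\<eta>} r" using \<eta> by simp
    have p2: "0 \<le> integral {\<eta>..T} r" by (rule integral_nonneg[OF i2]) (use rnn \<eta> in auto)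
    have "integral {0..\<eta>} r + integral {\<eta>..T} r = R"
      unfolding R_def by (rule Henstock_Kurzweil_Integration.integral_combine[OF _ _ ir]) (use \<eta> in auto)
    moreover have "0 < \<eta> * (r 0 / 2)" using \<eta> r0 by simp
    ultimately show ?thesis using p1 p2 by linarith
  qed
  have ne: "of_int n * (2*pi) + T = \<kappa> * R" using eqI by simp
  moreover have "\<kappa> * R \<noteq> 0" using kap' Rpos by simp
  ultimately have "\<delta>0 \<le> \<bar>\<kappa> * R\<bar>" using \<delta>0(2) by metis
  also have "\<dots> = \<bar>\<kappa>\<bar> * R" using Rpos by (simp add: abs_mult)
  also have "\<dots> \<le> \<bar>\<kappa>\<bar> * (4 * a^2 * T)" using Rle by (intro mult_left_mono) auto
  also have "\<dots> < \<delta>0" by (rule kapsmall)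
  finally show False by simp
qed


definition Psi1 :: "real \<Rightarrow> real \<Rightarrow> real \<Rightarrow> real \<Rightarrow> real" where
  "Psi1 c k z1 z2 = z1 / (1 + k * z1) - (c - k) * z2^2 / (1 + k * z1)^2"
definition Psi2 :: "real \<Rightarrow> real \<Rightarrow> real \<Rightarrow> real" where
  "Psi2 k z1 z2 = z2 / (1 + k * z1)"

lemma iso_deriv:
  fixes A B c k dd t :: real
  assumes dd: "dd = 3 * k - 2 * c" and hc: "c = k \<or> k = 2 * c"
    and u: "1 + k * (A * cos t + B * sin t) \<noteq> 0"
  defines "z1 \<equiv> \<lambda>t. A * cos t + B * sin t" and "z2 \<equiv> \<lambda>t. - A * sin t + B * cos t"
  shows "((\<lambda>t. (Psi1 c k (z1 t) (z2 t), Psi2 k (z1 t) (z2 t))) has_vector_derivative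
          (Psi2 k (z1 t) (z2 t) - dd * Psi1 c k (z1 t) (z2 t) * Psi2 k (z1 t) (z2 t),
           - Psi1 c k (z1 t) (z2 t) - c * (Psi2 k (z1 t) (z2 t))^2)) (at t)"
proof -
  have dz1: "(z1 has_real_derivative z2 t) (at t)" unfolding z1_def z2_def
    by (auto intro!: derivative_eq_intros)
  have dz2: "(z2 has_real_derivative - z1 t) (at t)" unfolding z1_def z2_def
    by (auto intro!: derivative_eq_intros)
  define U where "U = 1 + k * z1 t"
  have U: "U \<noteq> 0" using u unfolding U_def z1_def by simp
  have du: "((\<lambda>t. 1 + k * z1 t) has_real_derivative k * z2 t) (at t)"
    by (auto intro!: derivative_eq_intros dz1)
  have p2: "((\<lambda>t. Psi2 k (z1 t) (z2 t)) has_real_derivative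
        (- z1 t * U - k * (z2 t)^2) / U^2) (at t)"
    unfolding Psi2_def
    apply (rule DERIV_divide[OF dz2 du, THEN DERIV_cong])
    using U unfolding U_def by (auto simp: field_simps power2_eq_square)
  have a1: "((\<lambda>t. z1 t / (1 + k * z1 t)) has_real_derivative
      (z2 t * (1 + k * z1 t) - z1 t * (k * z2 t)) / ((1 + k * z1 t) * (1 + k * z1 t))) (at t)"
    by (rule DERIV_divide[OF dz1 du]) (use U U_def in simp)
  have a2: "((\<lambda>t. (c - k) * (z2 t)^2) has_real_derivative (c - k) * (2 * z2 t * (- z1 t))) (at t)"
    by (auto intro!: derivative_eq_intros dz2)
  have a3: "((\<lambda>t. (1 + k * z1 t)^2) has_real_derivative 2 * (1 + k * z1 t) * (k * z2 t)) (at t)"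
    by (auto intro!: derivative_eq_intros du dz1)
  have a4: "((\<lambda>t. (c - k) * (z2 t)^2 / (1 + k * z1 t)^2) has_real_derivative
      ((c - k) * (2 * z2 t * (- z1 t)) * (1 + k * z1 t)^2 - (c - k) * (z2 t)^2 * (2 * (1 + k * z1 t) * (k * z2 t)))
        / ((1 + k * z1 t)^2 * (1 + k * z1 t)^2)) (at t)"
    by (rule DERIV_divide[OF a2 a3]) (use U U_def in simp)
  have p1: "((\<lambda>t. Psi1 c k (z1 t) (z2 t)) has_real_derivative
        (z2 t * U + (c - k) * (2 * z1 t * z2 t * U + 2 * k * (z2 t)^3)) / U^3) (at t)"
    unfolding Psi1_def
    apply (rule DERIV_diff[OF a1 a4, THEN DERIV_cong])
    using U unfolding U_def[symmetric] by (simp add: field_simps power2_eq_square power3_eq_cube) (simp add: U_def algebra_simps)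
  have e1: "(z2 t * U + (c - k) * (2 * z1 t * z2 t * U + 2 * k * (z2 t)^3)) / U^3 =
      Psi2 k (z1 t) (z2 t) - dd * Psi1 c k (z1 t) (z2 t) * Psi2 k (z1 t) (z2 t)"
    unfolding Psi1_def Psi2_def U_def[symmetric]
    using U by (simp add: field_simps power2_eq_square power3_eq_cube) (use hc in \<open>auto simp: U_def dd algebra_simps\<close>)
  have e2: "(- z1 t * U - k * (z2 t)^2) / U^2 = - Psi1 c k (z1 t) (z2 t) - c * (Psi2 k (z1 t) (z2 t))^2"
    unfolding Psi1_def Psi2_def U_def[symmetric]
    using U by (simp add: field_simps power2_eq_square)
  show ?thesis
    apply (rule has_vector_derivative_Pair[of _ _ t UNIV, simplified])
    using p1 p2 unfolding e1 e2 by (simp_all add: has_real_derivative_iff_has_vector_derivative)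
qed


lemma Psi_Phi:
  assumes D: "DF c k x1 x2 \<noteq> 0"
  shows "Psi1 c k (sF c k x1 x2 / DF c k x1 x2) (x2 / DF c k x1 x2) = x1"
    and "Psi2 k (sF c k x1 x2 / DF c k x1 x2) (x2 / DF c k x1 x2) = x2"
proof -
  define s where "s = sF c k x1 x2"
  have Dd: "DF c k x1 x2 = 1 - k * s" unfolding DF_def s_def ..
  have u: "1 + k * (s / DF c k x1 x2) = 1 / DF c k x1 x2"
    using D unfolding Dd by (simp add: field_simps)
  show "Psi2 k (sF c k x1 x2 / DF c k x1 x2) (x2 / DF c k x1 x2) = x2"
    unfolding Psi2_def s_def[symmetric] u using D by simp
  show "Psi1 c k (sF c k x1 x2 / DF c k x1 x2) (x2 / DF c k x1 x2) = x1"
    unfolding Psi1_def s_def[symmetric] u using D by (simp add: s_def sF_def power_divide)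
qed

lemma Phi_Psi:
  assumes u: "1 + k * p \<noteq> 0"
  shows "DF c k (Psi1 c k p q) (Psi2 k p q) \<noteq> 0"
    and "sF c k (Psi1 c k p q) (Psi2 k p q) / DF c k (Psi1 c k p q) (Psi2 k p q) = p"
    and "Psi2 k p q / DF c k (Psi1 c k p q) (Psi2 k p q) = q"
proof -
  have s: "sF c k (Psi1 c k p q) (Psi2 k p q) = p / (1 + k * p)"
    unfolding sF_def Psi1_def Psi2_def by (simp add: power_divide)
  have D: "DF c k (Psi1 c k p q) (Psi2 k p q) = 1 / (1 + k * p)"
    unfolding DF_def s using u by (simp add: field_simps)
  show "DF c k (Psi1 c k p q) (Psi2 k p q) \<noteq> 0" unfolding D using u by simp
  show "sF c k (Psi1 c k p q) (Psi2 k p q) / DF c k (Psi1 c k p q) (Psi2 k p q) = p"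
    unfolding D s using u by simp
  show "Psi2 k p q / DF c k (Psi1 c k p q) (Psi2 k p q) = q"
    unfolding D unfolding Psi2_def using u by simp
qed

lemma rot_fix:
  fixes A B S :: real
  assumes S: "0 < S" "S < 2 * pi"
    and e1: "A * cos S + B * sin S = A" and e2: "- A * sin S + B * cos S = B"
  shows "A = 0 \<and> B = 0"
proof -
  have c1: "cos S \<noteq> 1"
  proof
    assume "cos S = 1"
    then obtain n :: int where n: "S = of_int n * 2 * pi" by (auto simp: cos_one_2pi_int)
    have "0 < real_of_int n * (2*pi)" using S n by (simp add: mult.assoc)
    then have "0 < real_of_int n" using pi_gt_zero by (simp add: zero_less_mult_iff)
    moreover have "real_of_int n * (2*pi) < 1 * (2*pi)" using S n by (simp add: mult.assoc)
    then have "real_of_int n < 1" using pi_gt_zero by (simp add: mult_less_cancel_right)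
    ultimately have "0 < n" "n < 1" by simp_all
    then show False by linarith
  qed
  define C where "C = cos S - 1"
  have Q: "C^2 + (sin S)^2 \<noteq> 0"
  proof -
    have "C^2 + (sin S)^2 = 2 - 2 * cos S" unfolding C_def
      using sin_cos_squared_add[of S] by (simp add: power2_eq_square algebra_simps)
    then show ?thesis using c1 by simp
  qed
  have f1: "A * C + B * sin S = 0" using e1 unfolding C_def by (simp add: algebra_simps)
  have f2: "- A * sin S + B * C = 0" using e2 unfolding C_def by (simp add: algebra_simps)
  have "A * (C^2 + (sin S)^2) = C * (A * C + B * sin S) - sin S * (- A * sin S + B * C)"
    by (simp add: algebra_simps power2_eq_square)
  then have "A * (C^2 + (sin S)^2) = 0" using f1 f2 by simp
  moreover have "B * (C^2 + (sin S)^2) = sin S * (A * C + B * sin S) + C * (- A * sin S + B * C)"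
    by (simp add: algebra_simps power2_eq_square)
  then have "B * (C^2 + (sin S)^2) = 0" using f1 f2 by simp
  ultimately show ?thesis using Q by (metis mult_eq_0_iff)
qed

lemma iso:
  fixes d :: nat and \<gamma> :: real
  defines "c \<equiv> 1 - \<gamma>" and "dd \<equiv> real d"
  defines "k \<equiv> (2 * c + dd) / 3"
  assumes kap: "(k - c) * (k - 2 * c) = 0"
  shows "isochronous_center (ep_field d \<gamma>)"
proof -
  have hc: "c = k \<or> k = 2 * c" using kap by auto
  have ddk: "dd = 3 * k - 2 * c" unfolding k_def by (simp add: algebra_simps)
  define M where "M = (1 + \<bar>k\<bar>) * (2 + \<bar>c - k\<bar>)"
  have M2: "M \<ge> 2" unfolding M_def
  proof -
    have "1 * 2 \<le> (1 + \<bar>k\<bar>) * (2 + \<bar>c - k\<bar>)" by (intro mult_mono) auto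
    then show "2 \<le> (1 + \<bar>k\<bar>) * (2 + \<bar>c - k\<bar>)" by simp
  qed
  define \<epsilon> where "\<epsilon> = 1 / (4 * M)"
  have \<epsilon>0: "\<epsilon> > 0" unfolding \<epsilon>_def using M2 by simp
  have \<epsilon>M: "\<epsilon> * M = 1/4" unfolding \<epsilon>_def using M2 by simp
  have \<epsilon>1: "\<epsilon> \<le> 1" unfolding \<epsilon>_def using M2 by (simp add: field_simps)
  have main: "\<exists>\<phi>. \<phi> 0 = x \<and> minimal_period_sol (ep_field d \<gamma>) \<phi> (2 * pi)"
    if x: "x \<in> ball 0 \<epsilon> - {0}" for x
  proof -
    obtain x1 x2 where xe: "x = (x1, x2)" by (cases x)
    have nx: "norm (x1, x2) < \<epsilon>" using x xe by (simp add: dist_norm norm_Pair)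
    have b1: "\<bar>x1\<bar> < \<epsilon>" using nx norm_fst_le[of x1 x2] by simp
    have b2: "\<bar>x2\<bar> < \<epsilon>" using nx norm_snd_le[of x2 x1] by simp
    have x0: "(x1, x2) \<noteq> (0, 0)" using x xe by (simp add: zero_prod_def)
    define s where "s = sF c k x1 x2"
    define D where "D = DF c k x1 x2"
    have x2sq: "x2^2 \<le> \<epsilon>"
    proof -
      have "x2^2 = \<bar>x2\<bar> * \<bar>x2\<bar>" by (simp add: power2_eq_square abs_mult_self_eq)
      also have "\<dots> \<le> 1 * \<epsilon>" using b2 \<epsilon>1 by (intro mult_mono) auto
      finally show ?thesis by simp
    qed
    have sb: "\<bar>s\<bar> \<le> \<epsilon> * (1 + \<bar>c - k\<bar>)"
    proof -
      have "\<bar>s\<bar> \<le> \<bar>x1\<bar> + \<bar>c - k\<bar> * x2^2"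
        unfolding s_def sF_def by (metis abs_mult abs_power2 abs_triangle_ineq)
      also have "\<dots> \<le> \<epsilon> + \<bar>c - k\<bar> * \<epsilon>" using b1 x2sq by (intro add_mono mult_left_mono) auto
      finally show ?thesis by (simp add: algebra_simps)
    qed
    have ks: "\<bar>k\<bar> * \<bar>s\<bar> \<le> 1/4"
    proof -
      have "\<bar>k\<bar> * \<bar>s\<bar> \<le> \<bar>k\<bar> * (\<epsilon> * (1 + \<bar>c - k\<bar>))" using sb by (intro mult_left_mono) auto
      also have "\<dots> = \<epsilon> * (\<bar>k\<bar> * (1 + \<bar>c - k\<bar>))" by simp
      also have "\<dots> \<le> \<epsilon> * M" unfolding M_def using \<epsilon>0
        by (intro mult_left_mono mult_mono) auto
      finally show ?thesis using \<epsilon>M by simp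
    qed
    have Dge: "D \<ge> 3/4"
    proof -
      have "\<bar>k * s\<bar> \<le> 1/4" using ks by (simp add: abs_mult)
      then show ?thesis unfolding D_def DF_def s_def[symmetric] by linarith
    qed
    define A where "A = s / D"
    define B where "B = x2 / D"
    have AB: "\<bar>A\<bar> + \<bar>B\<bar> \<le> (4/3) * (\<bar>s\<bar> + \<bar>x2\<bar>)"
    proof -
      have "\<bar>A\<bar> + \<bar>B\<bar> = (\<bar>s\<bar> + \<bar>x2\<bar>) / D" unfolding A_def B_def using Dge
        by (simp add: add_divide_distrib)
      also have "\<dots> \<le> (\<bar>s\<bar> + \<bar>x2\<bar>) / (3/4)" using Dge by (intro divide_left_mono) auto
      finally show ?thesis by simp
    qed
    have kAB: "\<bar>k\<bar> * (\<bar>A\<bar> + \<bar>B\<bar>) < 1"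
    proof -
      have "\<bar>s\<bar> + \<bar>x2\<bar> \<le> \<epsilon> * (2 + \<bar>c - k\<bar>)" using sb b2 by (simp add: algebra_simps)
      then have "\<bar>k\<bar> * (\<bar>A\<bar> + \<bar>B\<bar>) \<le> \<bar>k\<bar> * ((4/3) * (\<epsilon> * (2 + \<bar>c - k\<bar>)))"
        using AB by (intro mult_left_mono) auto
      also have "\<dots> = (4/3) * (\<epsilon> * (\<bar>k\<bar> * (2 + \<bar>c - k\<bar>)))" by simp
      also have "\<dots> \<le> (4/3) * (\<epsilon> * M)" unfolding M_def using \<epsilon>0
        by (intro mult_left_mono mult_right_mono) auto
      also have "\<dots> < 1" using \<epsilon>M by simp
      finally show ?thesis .
    qed
    define z1 where "z1 t = A * cos t + B * sin t" for t
    define z2 where "z2 t = - A * sin t + B * cos t" for t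
    have upos: "1 + k * z1 t > 0" for t
    proof -
      have "\<bar>z1 t\<bar> \<le> \<bar>A\<bar> + \<bar>B\<bar>"
      proof -
        have "\<bar>z1 t\<bar> \<le> \<bar>A * cos t\<bar> + \<bar>B * sin t\<bar>" unfolding z1_def by (rule abs_triangle_ineq)
        also have "\<dots> \<le> \<bar>A\<bar> * 1 + \<bar>B\<bar> * 1" unfolding abs_mult
          by (intro add_mono mult_left_mono) auto
        finally show ?thesis by simp
      qed
      then have "\<bar>k * z1 t\<bar> < 1" using kAB
        by (metis abs_ge_zero abs_mult le_less_trans mult_left_mono)
      then show ?thesis by linarith
    qed
    define \<phi> where "\<phi> t = (Psi1 c k (z1 t) (z2 t), Psi2 k (z1 t) (z2 t))" for t
    have sol: "(\<phi> has_vector_derivative ep_field d \<gamma> (\<phi> t)) (at t)" for t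
    proof -
      have u: "1 + k * (A * cos t + B * sin t) \<noteq> 0" using upos[of t] unfolding z1_def by simp
      have "ep_field d \<gamma> (\<phi> t) = (Psi2 k (z1 t) (z2 t) - dd * Psi1 c k (z1 t) (z2 t) * Psi2 k (z1 t) (z2 t),
           - Psi1 c k (z1 t) (z2 t) - c * (Psi2 k (z1 t) (z2 t))^2)"
        unfolding \<phi>_def ep_field_simp c_def dd_def ..
      then show ?thesis
        using iso_deriv[OF ddk hc u] unfolding \<phi>_def[abs_def] z1_def[abs_def] z2_def[abs_def] by simp
    qed
    have D0: "D \<noteq> 0" using Dge by simp
    have phi0: "\<phi> 0 = x"
      unfolding \<phi>_def z1_def z2_def xe A_def B_def s_def D_def
      using Psi_Phi[OF D0[unfolded D_def]] by simp
    have per: "\<phi> (t + 2 * pi) = \<phi> t" for t unfolding \<phi>_def z1_def z2_def by simp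
    have minimal: "\<not> (\<forall>t. \<phi> (t + S) = \<phi> t)" if S: "0 < S" "S < 2 * pi" for S
    proof
      assume "\<forall>t. \<phi> (t + S) = \<phi> t"
      then have "\<phi> S = \<phi> 0" by (metis add_0)
      then have eq: "Psi1 c k (z1 S) (z2 S) = Psi1 c k (z1 0) (z2 0)" "Psi2 k (z1 S) (z2 S) = Psi2 k (z1 0) (z2 0)"
        unfolding \<phi>_def by simp_all
      have u0: "1 + k * z1 0 \<noteq> 0" and uS: "1 + k * z1 S \<noteq> 0" using upos by (metis less_irrefl)+
      have "z1 S = z1 0" using Phi_Psi(2)[OF uS, where c=c and q="z2 S"] Phi_Psi(2)[OF u0, where c=c and q="z2 0"] eq by simp
      moreover have "z2 S = z2 0" using Phi_Psi(3)[OF uS, where c=c and q="z2 S"] Phi_Psi(3)[OF u0, where c=c and q="z2 0"] eq by simp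
      ultimately have "A * cos S + B * sin S = A" "- A * sin S + B * cos S = B"
        unfolding z1_def z2_def by simp_all
      then have "A = 0 \<and> B = 0" using rot_fix S by blast
      then have "\<phi> 0 = (0, 0)" unfolding \<phi>_def z1_def z2_def Psi1_def Psi2_def by simp
      then show False using phi0 xe x0 by simp
    qed
    show ?thesis
      unfolding minimal_period_sol_def periodic_sol_def ode_sol_def
      using phi0 sol per minimal by (intro exI[of _ \<phi>]) auto
  qed
  have f0: "ep_field d \<gamma> 0 = 0" by (simp add: ep_field_def zero_prod_def)
  have C: "center_at_origin (ep_field d \<gamma>)"
    unfolding center_at_origin_def
  proof (intro conjI f0 exI[of _ \<epsilon>] \<epsilon>0 ballI)
    fix x :: "real \<times> real" assume "x \<in> ball 0 \<epsilon> - {0}"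
    then show "\<exists>\<phi> T. \<phi> 0 = x \<and> periodic_sol (ep_field d \<gamma>) \<phi> T"
      using main unfolding minimal_period_sol_def by blast
  qed
  have I2: "\<exists>\<epsilon>>0. \<exists>T>0. \<forall>x \<in> ball 0 \<epsilon> - {0}. \<exists>\<phi>. \<phi> 0 = x \<and> minimal_period_sol (ep_field d \<gamma>) \<phi> T"
    using \<epsilon>0 main pi_gt_zero by (intro exI[of _ \<epsilon>] conjI exI[of _ "2 * pi"]) auto
  show ?thesis unfolding isochronous_center_def using C I2 by blast
qed


lemma cond_kappa:
  fixes d :: nat and \<gamma> :: real
  shows "(2 * (1 - \<gamma>) + real d)^2 = 9 * real d * (1 - \<gamma>) \<longleftrightarrow>
         ((2 * (1 - \<gamma>) + real d) / 3 - (1 - \<gamma>)) * ((2 * (1 - \<gamma>) + real d) / 3 - 2 * (1 - \<gamma>)) = 0"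
proof -
  define c where "c = 1 - \<gamma>"
  define X where "X = 2 * (1 - \<gamma>) + real d"
  have e1: "9 * ((X / 3 - c) * (X / 3 - 2 * c)) = (X - 3 * c) * (X - 6 * c)"
    by (simp add: field_simps)
  have e2: "(X - 3 * c) * (X - 6 * c) = X^2 - 9 * real d * c"
    unfolding X_def c_def by (simp add: algebra_simps power2_eq_square)
  have "X^2 = 9 * real d * c \<longleftrightarrow> (X / 3 - c) * (X / 3 - 2 * c) = 0"
    using e1 e2 by (metis eq_iff_diff_eq_0 mult_eq_0_iff zero_neq_numeral)
  then show ?thesis unfolding X_def c_def .
qed

lemma part2:
  fixes d :: nat and \<gamma> :: real
  shows "isochronous_center (ep_field d \<gamma>) \<longleftrightarrow> (2 * (1 - \<gamma>) + real d)^2 = 9 * real d * (1 - \<gamma>)"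
  unfolding cond_kappa
  using iso[of \<gamma> d] noniso[of \<gamma> d] by blast

theorem mainTheorem4:
  fixes d :: nat and \<gamma> :: real
  shows "(\<forall>I \<phi>. open I \<longrightarrow> ode_sol_on (ep_field d \<gamma>) I \<phi> \<longrightarrow>
            lienard_sol (2 * (1 - \<gamma>) + real d) (real d * (1 - \<gamma>)) I (\<lambda>t. snd (\<phi> t)))
       \<and> (isochronous_center (ep_field d \<gamma>) \<longleftrightarrow> (2 * (1 - \<gamma>) + real d)^2 = 9 * real d * (1 - \<gamma>))
       \<and> ((2 * (1 - \<gamma>) + real d)^2 = 9 * real d * (1 - \<gamma>) \<longleftrightarrow> \<gamma> = 1 - real d \<or> \<gamma> = 1 - real d / 4)
       \<and> (isochronous_center (ep_field d 0) \<longleftrightarrow> d = 1 \<or> d = 4)"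
proof (intro conjI allI impI)
  fix I \<phi> assume "open I" "ode_sol_on (ep_field d \<gamma>) I \<phi>"
  then show "lienard_sol (2 * (1 - \<gamma>) + real d) (real d * (1 - \<gamma>)) I (\<lambda>t. snd (\<phi> t))"
    by (intro part1)
next
  show "isochronous_center (ep_field d \<gamma>) \<longleftrightarrow> (2 * (1 - \<gamma>) + real d)^2 = 9 * real d * (1 - \<gamma>)"
    by (rule part2)
next
  show "(2 * (1 - \<gamma>) + real d)^2 = 9 * real d * (1 - \<gamma>) \<longleftrightarrow> \<gamma> = 1 - real d \<or> \<gamma> = 1 - real d / 4"
    by (rule part3)
next
  have "isochronous_center (ep_field d 0) \<longleftrightarrow> (0::real) = 1 - real d \<or> (0::real) = 1 - real d / 4"
    by (rule trans[OF part2[of d 0] part3[of 0 d]])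
  also have "\<dots> \<longleftrightarrow> d = 1 \<or> d = 4" by (auto simp: field_simps)
  finally show "isochronous_center (ep_field d 0) \<longleftrightarrow> d = 1 \<or> d = 4" .
qed


end
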